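(* Let $f:\mathbb{R}^d\to\mathbb{R}$ be differentiable with minimum value $f^\ast$ and let $L>0$, $\mu>0$, $\tau\in(0,1]$, $\rho\ge 1$. Assume: (L-smooth) $f(x)-f(y)-\langle\nabla f(y),x-y\rangle\le \frac{L}{2}\|x-y\|^2$ for all $x,y\in\mathbb{R}^d$; (SQC) there is a minimizer $x^\ast$ of $f$ such that $f^\ast\ge f(x)+\frac{1}{\tau}\langle\nabla f(x),x^\ast-x\rangle+\frac{\mu}{2}\|x-x^\ast\|^2$ for all $x\in\mathbb{R}^d$; (SGC) the stochastic gradient oracle satisfies $\mathbb{E}_\xi[\nabla f(x,\xi)]=\nabla f(x)$ and $\mathbb{E}_\xi[\|\nabla f(x,\xi)\|^2]\le\rho\|\nabla f(x)\|^2$ for all $x\in\mathbb{R}^d$. Let $\varepsilon\in(0,1)$ with $\varepsilon\ge(\mu/L)^{1/4}$, and run the continuized Nesterov algorithm (defined in the context) with parameters $\eta'=\frac{(1-\varepsilon)\tau}{\rho}\sqrt{\frac{1}{2(2-\tau)}}\sqrt{\frac{\mu}{L}}$, $\eta=\frac{1}{\rho}\sqrt{\frac{2}{2-\tau}}\sqrt{\frac{\mu}{L}}$, $\gamma'=\frac{1}{\rho}\sqrt{\frac{2-\tau}{2\mu L}}$, $\gamma=\frac{1}{\rho L}$. Then for every $k\in\mathbb{N}$, $$\mathbb{E}\Big[e^{\frac{(1-\varepsilon)\tau}{\rho}\sqrt{\frac{2}{2-\tau}}\sqrt{\frac{\mu}{L}}\,T_k}\big(f(\tilde x_k)-f^\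ast\big)\Big]\le\frac{1}{\varepsilon}\big(f(x_0)-f^\ast+\mu\|x_0-x^\ast\|^2\big).$$
   Context: Stochastic gradients: $(\Xi,\mathcal{P})$ is a probability space and $\nabla f(x,\xi)$, $x\in\mathbb{R}^d$, $\xi\in\Xi$, is a measurable stochastic estimate of $\nabla f(x)$; $\mathbb{E}_\xi$ denotes integration in $\xi\sim\mathcal{P}$. Continuized Nesterov algorithm with parameters $(\eta,\eta',\gamma,\gamma')$, $\eta+\eta'>0$: let $T_0=0$ and let $T_{k+1}-T_k$, $k\ge0$, be i.i.d. exponential random variables with parameter $1$; let $\xi_1,\xi_2,\dots$ be i.i.d. with law $\mathcal{P}$, independent of the $T_k$. Given a deterministic $x_0\in\mathbb{R}^d$, set $\tilde x_0=\tilde z_0=x_0$ and, writing $\Delta_k=T_{k+1}-T_k$, for $k\ge0$: $\tilde y_k=\tilde x_k+\frac{\eta}{\eta+\eta'}\big(1-e^{-(\eta+\eta')\Delta_k}\big)(\tilde z_k-\tilde x_k)$, $\tilde x_{k+1}=\tilde y_k-\gamma\nabla f(\tilde y_k,\xi_{k+1})$, $\tilde z_{k+1}=\tilde z_k+\eta'\frac{1-e^{-(\eta+\eta')\Delta_k}}{\eta'+\eta e^{-(\eta+\eta')\Delta_k}}(\tilde y_k-\tilde z_k)-\gamma'\nabla f(\tilde y_k,\xi_{k+1})$. *)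

theory Defs
  imports "HOL-Probability.Probability"
begin

definition step_law :: "'b measure \<Rightarrow> (real \<times> 'b) measure" where
  "step_law P = density lborel (exponential_density 1) \<Otimes>\<^sub>M P"

text \<open>Underlying probability space: omega k = (Delta_k, xi_(k+1)), all i.i.d.\<close>
definition cn_space :: "'b measure \<Rightarrow> (nat \<Rightarrow> real \<times> 'b) measure" where
  "cn_space P = (\<Pi>\<^sub>M k\<in>UNIV. step_law P)"

definition cn_T :: "nat \<Rightarrow> (nat \<Rightarrow> real \<times> 'b) \<Rightarrow> real" where
  "cn_T k \<omega> = (\<Sum>i<k. fst (\<omega> i))"

fun cn_iter :: "real \<Rightarrow> real \<Rightarrow> real \<Rightarrow> real \<Rightarrow> ('a::real_vector \<Rightarrow> 'b \<Rightarrow> 'a)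
    \<Rightarrow> 'a \<Rightarrow> nat \<Rightarrow> (nat \<Rightarrow> real \<times> 'b) \<Rightarrow> 'a \<times> 'a" where
  "cn_iter eta eta' gamma gamma' g x0 0 \<omega> = (x0, x0)"
| "cn_iter eta eta' gamma gamma' g x0 (Suc k) \<omega> =
     (let (x, z) = cn_iter eta eta' gamma gamma' g x0 k \<omega>;
          D = fst (\<omega> k); xi = snd (\<omega> k);
          e = exp (- (eta + eta') * D);
          y = x + (eta / (eta + eta') * (1 - e)) *\<^sub>R (z - x);
          gr = g y xi
      in (y - gamma *\<^sub>R gr,
          z + (eta' * (1 - e) / (eta' + eta * e)) *\<^sub>R (y - z) - gamma' *\<^sub>R gr))"

end

theory Submission
  imports Defs "HOL-Real_Asymp.Real_Asymp"
begin


definition cn_step :: "real \<Rightarrow> real \<Rightarrow> real \<Rightarrow> real \<Rightarrow> ('a::real_vector \<Rightarrow> 'b \<Rightarrow> 'a)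
    \<Rightarrow> 'a \<times> 'a \<Rightarrow> real \<times> 'b \<Rightarrow> 'a \<times> 'a" where
  "cn_step eta eta' gamma gamma' g s w =
     (let x = fst s; z = snd s; D = fst w; xi = snd w;
          e = exp (- (eta + eta') * D);
          y = x + (eta / (eta + eta') * (1 - e)) *\<^sub>R (z - x);
          gr = g y xi
      in (y - gamma *\<^sub>R gr,
          z + (eta' * (1 - e) / (eta' + eta * e)) *\<^sub>R (y - z) - gamma' *\<^sub>R gr))"

lemma cn_iter_Suc': "cn_iter eta eta' gamma gamma' g x0 (Suc k) \<omega> =
   cn_step eta eta' gamma gamma' g (cn_iter eta eta' gamma gamma' g x0 k \<omega>) (\<omega> k)"
  by (simp add: cn_step_def Let_def split: prod.splits)

declare cn_iter.simps(2)[simp del]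

lemma cn_iter_cong: "(\<And>i. i < k \<Longrightarrow> \<omega> i = \<omega>' i) \<Longrightarrow>
  cn_iter eta eta' gamma gamma' g x0 k \<omega> = cn_iter eta eta' gamma gamma' g x0 k \<omega>'"
  by (induction k) (simp_all add: cn_iter_Suc')

lemma cn_T_cong: "(\<And>i. i < k \<Longrightarrow> \<omega> i = \<omega>' i) \<Longrightarrow> cn_T k \<omega> = cn_T k \<omega>'"
  unfolding cn_T_def by (intro sum.cong) auto

lemma cn_T_Suc: "cn_T (Suc k) \<omega> = cn_T k \<omega> + fst (\<omega> k)"
  unfolding cn_T_def by simp

lemma bm_fst[measurable]: "(fst::'a::euclidean_space\<times>'a\<Rightarrow>'a) \<in> borel_measurable borel"
  by (intro borel_measurable_continuous_onI continuous_intros)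
lemma bm_snd[measurable]: "(snd::'a::euclidean_space\<times>'a\<Rightarrow>'a) \<in> borel_measurable borel"
  by (intro borel_measurable_continuous_onI continuous_intros)
lemma bm_pair[measurable]: "(f::_\<Rightarrow>'a::euclidean_space) \<in> borel_measurable M \<Longrightarrow> (h::_\<Rightarrow>'a) \<in> borel_measurable M \<Longrightarrow>
   (\<lambda>x. (f x, h x)) \<in> borel_measurable M"
  unfolding borel_prod[symmetric] by measurable

lemma sets_step_law: "sets (step_law P) = sets (borel \<Otimes>\<^sub>M P)"
  unfolding step_law_def by (intro sets_pair_measure_cong) auto

lemma cn_step_meas:
  fixes g :: "'a::euclidean_space \<Rightarrow> 'b \<Rightarrow> 'a"
  assumes g_meas: "(\<lambda>(x, \<xi>). g x \<xi>) \<in> borel_measurable (borel \<Otimes>\<^sub>M P)"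
  shows "(\<lambda>(s, w). cn_step eta eta' gamma gamma' g s w) \<in> borel_measurable (borel \<Otimes>\<^sub>M step_law P)"
proof -
  have m: "(\<lambda>(s::'a\<times>'a, w::real\<times>'b). g (fst s + (eta / (eta + eta') * (1 - exp (- (eta + eta') * fst w))) *\<^sub>R (snd s - fst s)) (snd w))
     \<in> borel_measurable (borel \<Otimes>\<^sub>M step_law P)"
  proof -
    have "(\<lambda>(s::'a\<times>'a, w::real\<times>'b). (fst s + (eta / (eta + eta') * (1 - exp (- (eta + eta') * fst w))) *\<^sub>R (snd s - fst s), snd w))
       \<in> measurable (borel \<Otimes>\<^sub>M step_law P) (borel \<Otimes>\<^sub>M P)"
      unfolding measurable_cong_sets[OF sets_pair_measure_cong[OF refl sets_step_law] refl]
      by measurable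
    from measurable_compose[OF this g_meas] show ?thesis by (simp add: case_prod_beta)
  qed
  show ?thesis
    unfolding cn_step_def Let_def
    using m unfolding measurable_cong_sets[OF sets_pair_measure_cong[OF refl sets_step_law] refl]
    by measurable
qed

lemma cn_step_meas2:
  fixes g :: "'a::euclidean_space \<Rightarrow> 'b \<Rightarrow> 'a"
  assumes g_meas: "(\<lambda>(x, \<xi>). g x \<xi>) \<in> borel_measurable (borel \<Otimes>\<^sub>M P)"
  shows "(\<lambda>w. cn_step eta eta' gamma gamma' g s w) \<in> borel_measurable (step_law P)"
proof -
  have "(\<lambda>w. (s, w)) \<in> measurable (step_law P) (borel \<Otimes>\<^sub>M step_law P)"
    by measurable
  from measurable_compose[OF this cn_step_meas[OF g_meas, of eta eta' gamma gamma']] show ?thesis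
    by simp
qed

lemma fst_step_meas: "fst \<in> borel_measurable (step_law P)"
  unfolding measurable_cong_sets[OF sets_step_law refl] by (rule measurable_fst)

lemma prob_step_law: "prob_space P \<Longrightarrow> prob_space (step_law P)"
  unfolding step_law_def
  by (intro prob_space_pair prob_space_exponential_density) auto

lemma cn_iter_meas:
  fixes g :: "'a::euclidean_space \<Rightarrow> 'b \<Rightarrow> 'a"
  assumes g_meas: "(\<lambda>(x, \<xi>). g x \<xi>) \<in> borel_measurable (borel \<Otimes>\<^sub>M P)"
  shows "{..<k} \<subseteq> J \<Longrightarrow> (\<lambda>\<omega>. cn_iter eta eta' gamma gamma' g x0 k \<omega>) \<in> borel_measurable (PiM J (\<lambda>_. step_law P))"
proof (induction k)
  case 0
  then show ?case by simp
next
  case (Suc k)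
  have "{..<k} \<subseteq> J" by (rule order_trans[OF _ Suc.prems]) auto
  then have IH: "(\<lambda>\<omega>. cn_iter eta eta' gamma gamma' g x0 k \<omega>) \<in> borel_measurable (PiM J (\<lambda>_. step_law P))"
    using Suc.IH by auto
  have kJ: "k \<in> J" using Suc.prems by auto
  have "(\<lambda>\<omega>. (cn_iter eta eta' gamma gamma' g x0 k \<omega>, \<omega> k)) \<in> measurable (PiM J (\<lambda>_. step_law P)) (borel \<Otimes>\<^sub>M step_law P)"
    using IH kJ by measurable
  from measurable_compose[OF this cn_step_meas[OF g_meas, of eta eta' gamma gamma']] show ?case
    unfolding cn_iter_Suc' by simp
qed

lemma iter_bound:
  fixes g :: "'a::euclidean_space \<Rightarrow> 'b \<Rightarrow> 'a" and V :: "'a \<times> 'a \<Rightarrow> real"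
  assumes P: "prob_space P"
    and g_meas: "(\<lambda>(x, \<xi>). g x \<xi>) \<in> borel_measurable (borel \<Otimes>\<^sub>M P)"
    and V_meas: "V \<in> borel_measurable borel"
    and one: "\<And>s. (\<integral>\<^sup>+w. ennreal (exp (a * fst w) * V (cn_step eta eta' gamma gamma' g s w)) \<partial>step_law P) \<le> ennreal (V s)"
  shows "(\<integral>\<^sup>+\<omega>. ennreal (exp (a * cn_T k \<omega>) * V (cn_iter eta eta' gamma gamma' g x0 k \<omega>)) \<partial>cn_space P)
     \<le> ennreal (V (x0, x0))"
proof -
  interpret S: prob_space "step_law P" using prob_step_law[OF P] .
  interpret PP: product_prob_space "\<lambda>_. step_law P" UNIV by unfold_locales
  let ?it = "cn_iter eta eta' gamma gamma' g x0"
  let ?F = "\<lambda>k \<omega>. ennreal (exp (a * cn_T k \<omega>) * V (?it k \<omega>))"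
  have Fm: "{..<k} \<subseteq> J \<Longrightarrow> ?F k \<in> borel_measurable (PiM J (\<lambda>_. step_law P))" for k J
  proof -
    assume kJ: "{..<k} \<subseteq> J"
    have "(\<lambda>\<omega>. cn_T k \<omega>) \<in> borel_measurable (PiM J (\<lambda>_. step_law P))"
      unfolding cn_T_def using kJ
    proof (intro borel_measurable_sum)
      fix i assume "i \<in> {..<k}"
      then have iJ: "i \<in> J" using kJ by auto
      have fstm: "fst \<in> borel_measurable (step_law P)"
        unfolding measurable_cong_sets[OF sets_step_law refl] by (rule measurable_fst)
      show "(\<lambda>\<omega>. fst (\<omega> i)) \<in> borel_measurable (PiM J (\<lambda>_. step_law P))"
        using measurable_compose[OF measurable_component_singleton[OF iJ] fstm] by simp
    qed
    then show ?thesis using cn_iter_meas[OF g_meas kJ] V_meas by measurable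
  qed
  have fin: "(\<integral>\<^sup>+\<omega>. ?F k \<omega> \<partial>PiM {..<k} (\<lambda>_. step_law P)) \<le> ennreal (V (x0, x0))" for k
  proof (induction k)
    case 0
    interpret P0: prob_space "PiM ({}::nat set) (\<lambda>_. step_law P)"
      by (rule prob_space_PiM) (simp add: S.prob_space_axioms)
    have "(\<integral>\<^sup>+\<omega>. ?F 0 \<omega> \<partial>PiM {..<0} (\<lambda>_. step_law P)) = (\<integral>\<^sup>+\<omega>. ennreal (V (x0, x0)) \<partial>PiM ({}::nat set) (\<lambda>_. step_law P))"
      by (simp add: cn_T_def)
    also have "\<dots> = ennreal (V (x0, x0))"
      by (simp add: P0.emeasure_space_1)
    finally show ?case by simp
  next
    case (Suc k)
    have eq: "{..<Suc k} = insert k {..<k}" by auto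
    have "(\<integral>\<^sup>+\<omega>. ?F (Suc k) \<omega> \<partial>PiM {..<Suc k} (\<lambda>_. step_law P))
        = (\<integral>\<^sup>+x. (\<integral>\<^sup>+y. ?F (Suc k) (x(k := y)) \<partial>step_law P) \<partial>PiM {..<k} (\<lambda>_. step_law P))"
      unfolding eq by (rule PP.product_nn_integral_insert) (auto intro!: Fm)
    also have "\<dots> \<le> (\<integral>\<^sup>+x. ?F k x \<partial>PiM {..<k} (\<lambda>_. step_law P))"
    proof (rule nn_integral_mono)
      fix x
      have "(\<integral>\<^sup>+y. ?F (Suc k) (x(k := y)) \<partial>step_law P)
          = (\<integral>\<^sup>+y. ennreal (exp (a * cn_T k x)) * ennreal (exp (a * fst y) * V (cn_step eta eta' gamma gamma' g (?it k x) y)) \<partial>step_law P)"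
      proof (rule nn_integral_cong)
        fix y
        have i: "?it k (x(k := y)) = ?it k x" by (rule cn_iter_cong) auto
        have t: "cn_T k (x(k := y)) = cn_T k x" by (rule cn_T_cong) auto
        show "?F (Suc k) (x(k := y)) = ennreal (exp (a * cn_T k x)) * ennreal (exp (a * fst y) * V (cn_step eta eta' gamma gamma' g (?it k x) y))"
          by (simp add: cn_iter_Suc' cn_T_Suc i t ennreal_mult'[symmetric] distrib_left exp_add mult.assoc)
      qed
      also have "\<dots> = ennreal (exp (a * cn_T k x)) * (\<integral>\<^sup>+y. ennreal (exp (a * fst y) * V (cn_step eta eta' gamma gamma' g (?it k x) y)) \<partial>step_law P)"
        proof (rule nn_integral_cmult)
        have vm: "(\<lambda>w. V (cn_step eta eta' gamma gamma' g (?it k x) w)) \<in> borel_measurable (step_law P)"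
          by (rule measurable_compose[OF cn_step_meas2[OF g_meas] V_meas])
        note fm = fst_step_meas[of P]
        show "(\<lambda>y. ennreal (exp (a * fst y) * V (cn_step eta eta' gamma gamma' g (?it k x) y))) \<in> borel_measurable (step_law P)"
          using vm fm by measurable
      qed
      also have "\<dots> \<le> ennreal (exp (a * cn_T k x)) * ennreal (V (?it k x))"
        by (intro mult_left_mono one) auto
      also have "\<dots> = ?F k x" by (simp add: ennreal_mult')
      finally show "(\<integral>\<^sup>+y. ?F (Suc k) (x(k := y)) \<partial>step_law P) \<le> ?F k x" .
    qed
    also have "\<dots> \<le> ennreal (V (x0, x0))" by (rule Suc.IH)
    finally show ?case .
  qed
  have "(\<integral>\<^sup>+\<omega>. ?F k \<omega> \<partial>cn_space P) = (\<integral>\<^sup>+\<omega>. ?F k (restrict \<omega> {..<k}) \<partial>cn_space P)"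
    by (intro nn_integral_cong arg_cong2[where f="\<lambda>a b. ennreal (exp (a) * V b)"] arg_cong[where f="\<lambda>t. a * t"] cn_T_cong cn_iter_cong) auto
  also have "\<dots> = (\<integral>\<^sup>+\<omega>. ?F k \<omega> \<partial>distr (cn_space P) (PiM {..<k} (\<lambda>_. step_law P)) (\<lambda>\<omega>. restrict \<omega> {..<k}))"
  proof -
    have m: "(\<lambda>\<omega>. restrict \<omega> {..<k}) \<in> measurable (cn_space P) (PiM {..<k} (\<lambda>_. step_law P))"
      unfolding cn_space_def by (rule measurable_restrict_subset) simp
    have fm: "?F k \<in> borel_measurable (distr (cn_space P) (PiM {..<k} (\<lambda>_. step_law P)) (\<lambda>\<omega>. restrict \<omega> {..<k}))"
      unfolding measurable_distr_eq1 by (rule Fm) simp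
    show ?thesis using nn_integral_distr[OF m fm] by simp
  qed
  also have "\<dots> = (\<integral>\<^sup>+\<omega>. ?F k \<omega> \<partial>PiM {..<k} (\<lambda>_. step_law P))"
    unfolding cn_space_def by (subst PP.distr_PiM_restrict_finite) auto
  finally show ?thesis using fin by simp
qed



lemma deriv_line:
  fixes f :: "'a::euclidean_space \<Rightarrow> real"
  assumes grad: "\<And>x. (f has_derivative (\<lambda>h. df x \<bullet> h)) (at x)"
  shows "((\<lambda>t. f (p + t *\<^sub>R w)) has_real_derivative (df (p + t *\<^sub>R w) \<bullet> w)) (at t)"
proof -
  have l: "((\<lambda>t. p + t *\<^sub>R w) has_derivative (\<lambda>h. h *\<^sub>R w)) (at t)"
    by (auto intro!: derivative_eq_intros)
  have "((\<lambda>t. f (p + t *\<^sub>R w)) has_derivative (\<lambda>h. df (p + t *\<^sub>R w) \<bullet> (h *\<^sub>R w))) (at t)"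
    using has_derivative_compose[OF l grad] by simp
  moreover have "(\<lambda>h. df (p + t *\<^sub>R w) \<bullet> (h *\<^sub>R w)) = (*) (df (p + t *\<^sub>R w) \<bullet> w)"
    by (auto simp: mult.commute)
  ultimately show ?thesis unfolding has_field_derivative_def by simp
qed

lemma QG:
  fixes f :: "'a::euclidean_space \<Rightarrow> real"
  assumes grad: "\<And>x. (f has_derivative (\<lambda>h. df x \<bullet> h)) (at x)"
    and fmin: "\<And>x. fstar \<le> f x"
    and mu_pos: "\<mu> > 0" and tau: "0 < \<tau>" "\<tau> \<le> 1"
    and SQC: "\<And>x. fstar \<ge> f x + (1 / \<tau>) * (df x \<bullet> (xstar - x)) + \<mu> / 2 * (norm (x - xstar))\<^sup>2"
  shows "f x - fstar \<ge> \<tau> * \<mu> / (2 * (2 - \<tau>)) * (norm (x - xstar))\<^sup>2"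
proof -
  define w where "w = x - xstar"
  define c where "c = \<tau> * \<mu> / (2 * (2 - \<tau>)) * (norm w)\<^sup>2"
  define h where "h t = f (xstar + t *\<^sub>R w) - fstar" for t
  define h' where "h' t = df (xstar + t *\<^sub>R w) \<bullet> w" for t
  define k where "k t = h t * t powr (- \<tau>) - c * t powr (2 - \<tau>)" for t
  have c0: "c \<ge> 0" unfolding c_def using tau mu_pos by auto
  have hd: "(h has_real_derivative h' t) (at t)" for t
    unfolding h_def h'_def by (auto intro!: derivative_eq_intros deriv_line[OF grad])
  have h0: "h t \<ge> 0" for t unfolding h_def using fmin by auto
  have key: "t * h' t - \<tau> * h t - c * (2 - \<tau>) * t\<^sup>2 \<ge> 0" if "t > 0" for t
  proof -
    let ?p = "xstar + t *\<^sub>R w"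
    have s: "fstar \<ge> f ?p + (1 / \<tau>) * (df ?p \<bullet> (xstar - ?p)) + \<mu> / 2 * (norm (?p - xstar))\<^sup>2"
      by (rule SQC)
    have e1: "df ?p \<bullet> (xstar - ?p) = - t * h' t" unfolding h'_def by (simp add: inner_minus_right)
    have e2: "(norm (?p - xstar))\<^sup>2 = t\<^sup>2 * (norm w)\<^sup>2" using that by (simp add: power_mult_distrib)
    have "fstar \<ge> f ?p - (t * h' t) / \<tau> + \<mu> / 2 * (t\<^sup>2 * (norm w)\<^sup>2)"
      using s unfolding e1 e2 by simp
    then have "\<tau> * fstar \<ge> \<tau> * f ?p - t * h' t + \<tau> * \<mu> / 2 * (t\<^sup>2 * (norm w)\<^sup>2)"
      using tau by (simp add: field_simps)
    moreover have "c * (2 - \<tau>) * t\<^sup>2 = \<tau> * \<mu> / 2 * (t\<^sup>2 * (norm w)\<^sup>2)" unfolding c_def using tau by (simp add: field_simps)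
    ultimately show ?thesis unfolding h_def by (simp add: algebra_simps)
  qed
  have kd: "(k has_real_derivative (t powr (- \<tau> - 1) * (t * h' t - \<tau> * h t - c * (2 - \<tau>) * t\<^sup>2))) (at t)"
    if "t > 0" for t
  proof -
    have "(k has_real_derivative (h' t * t powr (- \<tau>) + h t * (- \<tau> * t powr (- \<tau> - 1)) - c * ((2 - \<tau>) * t powr (2 - \<tau> - 1)))) (at t)"
      unfolding k_def using that
      by (auto intro!: derivative_eq_intros hd has_real_derivative_powr)
    moreover have "t powr (- \<tau>) = t powr (- \<tau> - 1) * t"
    proof -
      have t1: "t powr 1 = t" using that by simp
      have "t powr (- \<tau> - 1) * t = t powr (- \<tau> - 1) * t powr 1" by (simp only: t1)
      also have "\<dots> = t powr (- \<tau> - 1 + 1)" by (rule powr_add[symmetric])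
      finally show ?thesis by simp
    qed
    moreover have "t powr (2 - \<tau> - 1) = t powr (- \<tau> - 1) * t\<^sup>2"
    proof -
      have "t powr (- \<tau> - 1) * t\<^sup>2 = t powr (- \<tau> - 1) * t powr 2" using that by (simp add: powr_realpow)
      also have "\<dots> = t powr (- \<tau> - 1 + 2)" by (rule powr_add[symmetric])
      finally show ?thesis by simp
    qed
    ultimately show ?thesis by (simp add: algebra_simps)
  qed
  have kmono: "k s \<le> k 1" if "0 < s" "s \<le> 1" for s
  proof (rule DERIV_nonneg_imp_nondecreasing[OF that(2)])
    fix t assume "s \<le> t" "t \<le> 1"
    then have t: "t > 0" using that by auto
    show "\<exists>y. (k has_real_derivative y) (at t) \<and> 0 \<le> y"
      using kd[OF t] key[OF t] t by (intro exI[of _ "t powr (- \<tau> - 1) * (t * h' t - \<tau> * h t - c * (2 - \<tau>) * t\<^sup>2)"]) auto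
  qed
  have bound: "h 1 \<ge> c - c * s" if "0 < s" "s \<le> 1" for s
  proof -
    have "k 1 = h 1 - c" unfolding k_def by simp
    moreover have "k s \<ge> - c * s powr (2 - \<tau>)" unfolding k_def using h0[of s] c0 that by simp
    moreover have "s powr (2 - \<tau>) \<le> s powr 1"
      using that tau by (intro powr_mono') auto
    then have "c * s powr (2 - \<tau>) \<le> c * s" using c0 that by (intro mult_left_mono) auto
    ultimately show ?thesis using kmono[OF that] by linarith
  qed
  have "c \<le> h 1"
  proof (rule field_le_epsilon)
    fix e :: real assume e: "0 < e"
    define s where "s = min 1 (e / (c + 1))"
    have s: "0 < s" "s \<le> 1" unfolding s_def using e c0 by auto
    have "c * s \<le> c * (e / (c + 1))" unfolding s_def using c0 by (intro mult_left_mono) auto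
    also have "\<dots> \<le> e" using c0 e by (simp add: field_simps)
    finally show "c \<le> h 1 + e" using bound[OF s] by simp
  qed
  then show ?thesis unfolding h_def c_def w_def by simp
qed



lemma t1: "(rr::real) > 0 \<Longrightarrow> ss>0 \<Longrightarrow> L>0 \<Longrightarrow> (1/(rr* ss*L))^2 = 1 / (rr^2 * ss^2 * L^2)"
  by (simp add: power_divide power_mult_distrib)
lemma t1b: "ss>0 \<Longrightarrow> (L::real)>0 \<Longrightarrow> \<tau><2 \<Longrightarrow> \<mu> = ss^2 * L \<Longrightarrow> 1 / ((2/(2-\<tau>)) * ss^2 * L^2) = (2-\<tau>)/(2*\<mu>*L)"
  by (simp add: field_simps power2_eq_square)
lemma t2: "\<tau> < 2 \<Longrightarrow> \<mu> = ss^2 * L \<Longrightarrow> \<mu> / (2 - \<tau>) = ss^2 * L * (2/(2-\<tau>)) / (2::real)"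
  by (simp add: field_simps)
lemma t3: "(rr::real) > 0 \<Longrightarrow> ss>0 \<Longrightarrow> L>0 \<Longrightarrow> \<rho> > 0 \<Longrightarrow> 2 * (ss^2 * L * rr^2 / 2) * (1 / (\<rho> * rr * ss * L)) = rr * ss / \<rho>"
  by (simp add: field_simps power2_eq_square)
lemma t4: "(rr::real) > 0 \<Longrightarrow> ss>0 \<Longrightarrow> L>0 \<Longrightarrow> \<rho> > 0 \<Longrightarrow> \<rho> * (L * (1 / (\<rho> * L))^2 / 2 + (ss^2 * L * rr^2 / 2) * (1 / (\<rho> * rr * ss * L))^2) = 1 / (\<rho> * L)"
  by (simp add: field_simps power2_eq_square)
lemma t5: "(rr::real) > 0 \<Longrightarrow> ss>0 \<Longrightarrow> L>0 \<Longrightarrow> \<rho> > 0 \<Longrightarrow> (ss^2 * L * rr^2 / 2) * (1 / (\<rho> * L)) = ss\<^sup>2 * rr\<^sup>2 / (2 * \<rho>)"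
  by (simp add: field_simps)
lemma t6: "(2 / (2 - \<tau>)) * (2 - \<tau>) = (2::real)" if "\<tau> < 2" using that by (simp add: field_simps)
lemma t7: "(2 / (2 - \<tau>)) / 4 = 1 / (2 * (2 - (\<tau>::real)))" if "\<tau> < 2" using that by (simp add: field_simps)
lemma t8: "(B::real) * ((1 - \<epsilon>) * \<tau> * eta / 2) + - B * (1 - \<epsilon>) * \<tau> / 2 * eta = 0" by (simp add: field_simps)
lemma t9: "2 * (- B * (1 - \<epsilon>) * \<tau> / 2) * gam = - ((1 - \<epsilon>) * \<tau>) * (B * (gam::real))" by (simp add: field_simps)

lemma F6_core:
  fixes r s \<tau> \<epsilon> :: real
  assumes r1: "r \<ge> 1" and rr: "r\<^sup>2 * (2 - \<tau>) = 2" and t: "0 < \<tau>" "\<tau> \<le> 1"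
    and e: "0 < \<epsilon>" "\<epsilon> < 1" and s: "0 < s" "s \<le> \<epsilon>\<^sup>2"
  shows "r\<^sup>2 * ((1 - \<epsilon>) * \<tau>) * (2 - (1 - \<epsilon>) * \<tau>) + (1 - \<epsilon>) * \<tau> * \<tau> * s * r \<le> 2 * \<tau>"
proof -
  define a where "a = (1 - \<epsilon>) * \<tau>"
  have a0: "a \<ge> 0" unfolding a_def using e t by simp
  have eq1: "(2 - \<tau>) * (r\<^sup>2 * a * (2 - a) + a * \<tau> * s * r) = (r\<^sup>2 * (2 - \<tau>)) * a * (2 - a) + a * \<tau> * s * (r * (2 - \<tau>))"
    by (simp add: algebra_simps)
  have r2: "r * (2 - \<tau>) \<le> 2"
  proof -
    have "r * (2 - \<tau>) \<le> r * r * (2 - \<tau>)" using r1 t by (intro mult_right_mono) (auto simp: mult_le_cancel_left1)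
    then show ?thesis using rr by (simp add: power2_eq_square)
  qed
  have b: "a * \<tau> * s * (r * (2 - \<tau>)) \<le> a * \<tau> * \<epsilon>\<^sup>2 * 2"
    using a0 t s r2 r1 by (intro mult_mono) auto
  have eq2: "2 * \<tau> * (2 - \<tau>) - (2 * a * (2 - a) + 2 * a * \<tau> * \<epsilon>\<^sup>2) = 2 * \<tau> * (2 * \<epsilon> * (1 - \<tau>) + \<tau> * \<epsilon> ^ 3)"
    unfolding a_def by (simp add: power2_eq_square power3_eq_cube algebra_simps)
  have c: "0 \<le> 2 * \<tau> * (2 * \<epsilon> * (1 - \<tau>) + \<tau> * \<epsilon> ^ 3)" using t e by simp
  have "(2 - \<tau>) * (r\<^sup>2 * a * (2 - a) + a * \<tau> * s * r) \<le> (2 - \<tau>) * (2 * \<tau>)"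
    using eq1 rr b eq2 c by (simp add: algebra_simps)
  then have "r\<^sup>2 * a * (2 - a) + a * \<tau> * s * r \<le> 2 * \<tau>" using t by simp
  then show ?thesis unfolding a_def by (simp add: algebra_simps)
qed
lemma F6_gen:
  fixes r s \<tau> \<epsilon> \<rho> L :: real
  assumes r1: "r \<ge> 1" and rr: "r\<^sup>2 * (2 - \<tau>) = 2" and t: "0 < \<tau>" "\<tau> \<le> 1"
    and e: "0 < \<epsilon>" "\<epsilon> < 1" and s: "0 < s" "s \<le> \<epsilon>\<^sup>2" and p: "\<rho> > 0" and L: "L > 0"
    and mu: "\<mu> = s\<^sup>2 * L"
  shows "(- (s\<^sup>2 * L * r\<^sup>2 / 2) * (1 - \<epsilon>) * \<tau> / 2) * ((1 - \<epsilon>) * \<tau> * (r * s / \<rho>) - 2 * (r * s / \<rho>))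
     \<le> (r * s / \<rho> + 2 * (- (s\<^sup>2 * L * r\<^sup>2 / 2) * (1 - \<epsilon>) * \<tau> / 2) * (1 / (\<rho> * L))) * \<tau> * \<mu> / 2"
proof -
  define a where "a = (1 - \<epsilon>) * \<tau>"
  define K where "K = s ^ 3 * L * r / (4 * \<rho>)"
  have K0: "K \<ge> 0" unfolding K_def using s L r1 p by simp
  have l: "(- (s\<^sup>2 * L * r\<^sup>2 / 2) * (1 - \<epsilon>) * \<tau> / 2) * ((1 - \<epsilon>) * \<tau> * (r * s / \<rho>) - 2 * (r * s / \<rho>))
      = K * (r\<^sup>2 * a * (2 - a))"
    unfolding K_def a_def using p by (simp add: field_simps power2_eq_square power3_eq_cube)
  have rr': "(r * s / \<rho> + 2 * (- (s\<^sup>2 * L * r\<^sup>2 / 2) * (1 - \<epsilon>) * \<tau> / 2) * (1 / (\<rho> * L))) * \<tau> * \<mu> / 2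
      = K * (2 * \<tau> - a * \<tau> * s * r)"
    unfolding K_def a_def mu using p L by (simp add: field_simps power2_eq_square power3_eq_cube)
  have "r\<^sup>2 * a * (2 - a) \<le> 2 * \<tau> - a * \<tau> * s * r"
    using F6_core[OF assms(1-8)] unfolding a_def by (simp add: algebra_simps)
  then show ?thesis unfolding l rr' using K0 by (rule mult_left_mono)
qed




locale cnset =
  fixes f :: "'a::euclidean_space \<Rightarrow> real" and df :: "'a \<Rightarrow> 'a"
    and P :: "'b measure" and g :: "'a \<Rightarrow> 'b \<Rightarrow> 'a"
    and fstar L \<mu> \<tau> \<rho> \<epsilon> :: real and xstar :: 'a
    and eta etap gam gamp alpha B D :: real
  assumes grad: "\<And>x. (f has_derivative (\<lambda>h. df x \<bullet> h)) (at x)"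
    and fmin: "\<And>x. fstar \<le> f x" and xstar_min: "f xstar = fstar"
    and L_pos: "L > 0" and mu_pos: "\<mu> > 0"
    and tau: "0 < \<tau>" "\<tau> \<le> 1" and rho: "\<rho> \<ge> 1"
    and smooth: "\<And>x y. f x - f y - df y \<bullet> (x - y) \<le> L / 2 * (norm (x - y))\<^sup>2"
    and SQC: "\<And>x. fstar \<ge> f x + (1 / \<tau>) * (df x \<bullet> (xstar - x)) + \<mu> / 2 * (norm (x - xstar))\<^sup>2"
    and P_prob: "prob_space P"
    and g_meas: "(\<lambda>(x, \<xi>). g x \<xi>) \<in> borel_measurable (borel \<Otimes>\<^sub>M P)"
    and unbiased: "\<And>x. integrable P (g x) \<and> (\<integral>\<xi>. g x \<xi> \<partial>P) = df x"
    and SGC: "\<And>x. (\<integral>\<^sup>+\<xi>. ennreal ((norm (g x \<xi>))\<^sup>2) \<partial>P) \<le> ennreal (\<rho> * (norm (df x))\<^sup>2)"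
    and eps: "0 < \<epsilon>" "\<epsilon> < 1" "\<epsilon> \<ge> (\<mu> / L) powr (1/4)"
    and eta_def: "eta = 1 / \<rho> * sqrt (2 / (2 - \<tau>)) * sqrt (\<mu> / L)"
    and etap_def: "etap = (1 - \<epsilon>) * \<tau> / \<rho> * sqrt (1 / (2 * (2 - \<tau>))) * sqrt (\<mu> / L)"
    and gam_def: "gam = 1 / (\<rho> * L)"
    and gamp_def: "gamp = 1 / \<rho> * sqrt ((2 - \<tau>) / (2 * \<mu> * L))"
    and alpha_def: "alpha = (1 - \<epsilon>) * \<tau> / \<rho> * sqrt (2 / (2 - \<tau>)) * sqrt (\<mu> / L)"
    and B_def: "B = \<mu> / (2 - \<tau>)"
    and D_def: "D = - B * (1 - \<epsilon>) * \<tau> / 2"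
begin

interpretation P: prob_space P by (rule P_prob)

definition V :: "'a \<times> 'a \<Rightarrow> real" where
  "V s = f (fst s) - fstar + B * (norm (snd s - xstar))\<^sup>2 + D * (norm (fst s - xstar))\<^sup>2"

definition Tg :: "'a \<Rightarrow> 'a \<Rightarrow> real" where
  "Tg y z = V (y, z) - alpha * V (y, z) - (eta * (df y \<bullet> (z - y)) + 2 * B * etap * ((z - xstar) \<bullet> (y - z))
      + 2 * D * eta * ((y - xstar) \<bullet> (z - y)))"

definition ss :: real where "ss = sqrt (\<mu> / L)"
definition rr :: real where "rr = sqrt (2 / (2 - \<tau>))"

lemma ss_pos: "ss > 0" unfolding ss_def using mu_pos L_pos by simp
lemma mu_eq: "\<mu> = ss\<^sup>2 * L" unfolding ss_def using mu_pos L_pos by simp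
lemma tau2: "2 - \<tau> > 0" using tau by simp
lemma rr_sq': "rr\<^sup>2 = 2 / (2 - \<tau>)" unfolding rr_def using tau2 by simp
lemma rr_sq: "rr\<^sup>2 * (2 - \<tau>) = 2" unfolding rr_sq' using t6[of \<tau>] tau by simp
lemma rr_ge1: "rr \<ge> 1" unfolding rr_def using tau by simp
lemma rr_le2: "rr \<le> 2"
proof -
  have "rr\<^sup>2 \<le> 2\<^sup>2" unfolding rr_sq' using tau2 tau by (simp add: divide_le_eq)
  then show ?thesis by (rule power2_le_imp_le) simp
qed
lemma ss_le: "ss \<le> \<epsilon>\<^sup>2"
proof -
  let ?q = "(\<mu> / L) powr (1/4)"
  have q0: "?q \<ge> 0" by simp
  have "?q ^ 4 \<le> \<epsilon> ^ 4" using eps(3) q0 by (intro power_mono) auto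
  moreover have "?q ^ 4 = \<mu> / L"
  proof -
    have "?q ^ 4 = ?q powr (real 4)" using mu_pos L_pos by (subst powr_realpow) auto
    also have "\<dots> = (\<mu> / L) powr (1/4 * 4)" by (simp add: powr_powr)
    finally show ?thesis using mu_pos L_pos by simp
  qed
  ultimately have "ss\<^sup>2 \<le> (\<epsilon>\<^sup>2)\<^sup>2" unfolding ss_def using mu_pos L_pos by simp
  then show ?thesis by (rule power2_le_imp_le) simp
qed
lemma sqrt1: "sqrt (1 / (2 * (2 - \<tau>))) = rr / 2"
proof (rule real_sqrt_unique)
  have "(rr / 2)\<^sup>2 = rr\<^sup>2 / 4" by (simp add: power_divide)
  also have "\<dots> = 1 / (2 * (2 - \<tau>))" unfolding rr_sq' using t7[of \<tau>] tau by simp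
  finally show "(rr / 2)\<^sup>2 = 1 / (2 * (2 - \<tau>))" .
  show "0 \<le> rr / 2" using rr_ge1 by simp
qed
lemma sqrt2: "sqrt ((2 - \<tau>) / (2 * \<mu> * L)) = 1 / (rr * ss * L)"
proof (rule real_sqrt_unique)
  have "(1 / (rr * ss * L))\<^sup>2 = 1 / (rr\<^sup>2 * ss\<^sup>2 * L\<^sup>2)" using t1 rr_ge1 ss_pos L_pos by simp
  also have "\<dots> = (2 - \<tau>) / (2 * \<mu> * L)" unfolding rr_sq' using tau by (intro t1b[OF ss_pos L_pos _ mu_eq]) simp
  finally show "(1 / (rr * ss * L))\<^sup>2 = (2 - \<tau>) / (2 * \<mu> * L)" .
  show "0 \<le> 1 / (rr * ss * L)" using rr_ge1 ss_pos L_pos by simp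
qed

lemma eta_eq: "eta = rr * ss / \<rho>" unfolding eta_def rr_def ss_def by simp
lemma alpha_eq: "alpha = (1 - \<epsilon>) * \<tau> * eta" unfolding alpha_def eta_def by simp
lemma etap_eq: "etap = (1 - \<epsilon>) * \<tau> * eta / 2" unfolding etap_def eta_eq sqrt1 ss_def[symmetric] by simp
lemma gamp_eq: "gamp = 1 / (\<rho> * rr * ss * L)" unfolding gamp_def sqrt2 by simp
lemma B_eq: "B = ss\<^sup>2 * L * rr\<^sup>2 / 2"
  unfolding B_def rr_sq' using tau by (intro t2[OF _ mu_eq]) simp

lemma pos: "eta > 0" "etap > 0" "gam > 0" "gamp > 0" "alpha > 0" "B > 0" "D \<le> 0"
proof -
  have r: "rr > 0" using rr_ge1 by simp
  have p: "\<rho> > 0" using rho by simp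
  show e: "eta > 0" unfolding eta_eq using r ss_pos p by simp
  show "etap > 0" unfolding etap_eq using e eps tau by simp
  show "gam > 0" unfolding gam_def using p L_pos by simp
  show "gamp > 0" unfolding gamp_eq using p r ss_pos L_pos by simp
  show "alpha > 0" unfolding alpha_eq using e eps tau by simp
  show b: "B > 0" unfolding B_def using mu_pos tau by simp
  show "D \<le> 0" unfolding D_def using b eps tau by simp
qed
lemma F1: "2 * B * gamp = eta"
  unfolding B_eq gamp_eq eta_eq using t3[of rr ss L \<rho>] rr_ge1 ss_pos L_pos rho by simp
lemma F2: "\<rho> * (L * gam\<^sup>2 / 2 + B * gamp\<^sup>2) = gam"
  unfolding B_eq gamp_eq gam_def using t4[of rr ss L \<rho>] rr_ge1 ss_pos L_pos rho by simp
lemma F3: "alpha = 2 * etap" unfolding alpha_eq etap_eq by simp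
lemma F4: "B * etap + D * eta = 0" unfolding D_def etap_eq by (rule t8)
lemma Bgam: "B * gam = ss\<^sup>2 * rr\<^sup>2 / (2 * \<rho>)"
  unfolding B_eq gam_def using t5[of rr ss L \<rho>] rr_ge1 ss_pos L_pos rho by simp
lemma key2: "ss * rr * ((1 - \<epsilon>) * \<tau>) \<le> 2 * \<epsilon>\<^sup>2 * (1 - \<epsilon>)"
proof -
  have "ss * rr * ((1 - \<epsilon>) * \<tau>) \<le> \<epsilon>\<^sup>2 * 2 * (1 - \<epsilon>)"
    using ss_le rr_le2 ss_pos rr_ge1 eps tau
    by (intro mult_mono) (auto intro: mult_left_le_one_le)
  then show ?thesis by simp
qed
lemma key1: "ss * rr * ((1 - \<epsilon>) * \<tau>) \<le> 2 * \<epsilon>\<^sup>2"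
proof -
  have "2 * \<epsilon>\<^sup>2 * (1 - \<epsilon>) \<le> 2 * \<epsilon>\<^sup>2 * 1" using eps by (intro mult_left_mono) auto
  then show ?thesis using key2 by simp
qed
lemma F5: "alpha \<le> (eta + 2 * D * gam) * \<tau>"
proof -
  have "2 * D * gam = - ((1 - \<epsilon>) * \<tau>) * (B * gam)" unfolding D_def by (rule t9)
  also have "\<dots> = - ((1 - \<epsilon>) * \<tau>) * (ss\<^sup>2 * rr\<^sup>2 / (2 * \<rho>))" unfolding Bgam ..
  finally have d: "2 * D * gam = - ((1 - \<epsilon>) * \<tau>) * (ss\<^sup>2 * rr\<^sup>2 / (2 * \<rho>))" .
  have "ss * rr * ((1 - \<epsilon>) * \<tau>) \<le> 2 * \<epsilon>" using key1 eps
    by (smt (verit) mult_left_le_one_le power2_eq_square)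
  then have m: "(ss * rr * ((1 - \<epsilon>) * \<tau>)) * (rr * ss / (2 * \<rho>)) \<le> (2 * \<epsilon>) * (rr * ss / (2 * \<rho>))"
    using rr_ge1 ss_pos rho by (intro mult_right_mono) auto
  have "(1 - \<epsilon>) * \<tau> * (ss\<^sup>2 * rr\<^sup>2 / (2 * \<rho>)) = (ss * rr * ((1 - \<epsilon>) * \<tau>)) * (rr * ss / (2 * \<rho>))"
    by (simp add: power2_eq_square mult_ac)
  also have "\<dots> \<le> (2 * \<epsilon>) * (rr * ss / (2 * \<rho>))" by (rule m)
  also have "\<dots> = \<epsilon> * (rr * ss / \<rho>)" by simp
  finally have "(1 - \<epsilon>) * \<tau> * (ss\<^sup>2 * rr\<^sup>2 / (2 * \<rho>)) \<le> \<epsilon> * (rr * ss / \<rho>)" .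
  then have hX: "(1 - \<epsilon>) * \<tau> * (ss\<^sup>2 * rr\<^sup>2 / (2 * \<rho>)) \<le> \<epsilon> * eta" unfolding eta_eq .
  have e1: "eta + 2 * D * gam = eta - (1 - \<epsilon>) * \<tau> * (ss\<^sup>2 * rr\<^sup>2 / (2 * \<rho>))" unfolding d by simp
  have e2: "(1 - \<epsilon>) * eta = eta - \<epsilon> * eta" by (simp add: algebra_simps)
  have "(1 - \<epsilon>) * eta \<le> eta + 2 * D * gam" unfolding e1 e2 using hX by linarith
  then have "(1 - \<epsilon>) * eta * \<tau> \<le> (eta + 2 * D * gam) * \<tau>" using tau by (intro mult_right_mono) auto
  then show ?thesis unfolding alpha_eq by (simp add: algebra_simps)
qed
lemma F6: "D * (alpha - 2 * eta) \<le> (eta + 2 * D * gam) * \<tau> * \<mu> / 2"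
proof -
  have p: "\<rho> > 0" using rho by simp
  show ?thesis unfolding D_def B_eq alpha_eq eta_eq gam_def
    using F6_gen[OF rr_ge1 rr_sq tau eps(1,2) ss_pos ss_le p L_pos mu_eq] by simp
qed
lemma F7: "alpha < 1"
proof -
  have "alpha = (1 - \<epsilon>) * \<tau> * rr * ss / \<rho>" unfolding alpha_eq eta_eq by simp
  also have "\<dots> \<le> (1 - \<epsilon>) * \<tau> * rr * ss" using rho eps tau rr_ge1 ss_pos
  proof -
    have x0: "(1 - \<epsilon>) * \<tau> * rr * ss \<ge> 0" using eps tau rr_ge1 ss_pos by simp
    have "(1 - \<epsilon>) * \<tau> * rr * ss / \<rho> \<le> (1 - \<epsilon>) * \<tau> * rr * ss / 1"
      using x0 rho by (intro divide_left_mono) auto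
    then show ?thesis by simp
  qed
  also have "\<dots> = ss * rr * ((1 - \<epsilon>) * \<tau>)" by simp
  also have "\<dots> \<le> 2 * \<epsilon>\<^sup>2 * (1 - \<epsilon>)" by (rule key2)
  also have "\<dots> \<le> 2 * \<epsilon> * (1 - \<epsilon>)"
  proof -
    have "\<epsilon>\<^sup>2 \<le> \<epsilon>" using eps by (simp add: power2_eq_square mult_left_le_one_le)
    then show ?thesis using eps by (intro mult_right_mono) auto
  qed
  also have "\<dots> < 1"
  proof -
    have "0 \<le> (\<epsilon> - 1/2)\<^sup>2" by simp
    then show ?thesis by (simp add: power2_eq_square algebra_simps)
  qed
  finally show ?thesis .
qed
lemma F8: "B + D \<le> \<mu>" "- D = (1 - \<epsilon>) * (\<tau> * \<mu> / (2 * (2 - \<tau>)))"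
proof -
  have "B \<le> \<mu>" unfolding B_def using tau mu_pos by (simp add: divide_le_eq)
  then show "B + D \<le> \<mu>" using pos by simp
  show "- D = (1 - \<epsilon>) * (\<tau> * \<mu> / (2 * (2 - \<tau>)))" unfolding D_def B_def by (simp add: field_simps)
qed

lemma V_ge: "V s \<ge> \<epsilon> * (f (fst s) - fstar)"
proof -
  have q: "f (fst s) - fstar \<ge> \<tau> * \<mu> / (2 * (2 - \<tau>)) * (norm (fst s - xstar))\<^sup>2"
    by (rule QG[OF grad fmin mu_pos tau SQC])
  have "D * (norm (fst s - xstar))\<^sup>2 \<ge> - (1 - \<epsilon>) * (f (fst s) - fstar)"
  proof -
    have "- D * (norm (fst s - xstar))\<^sup>2 = (1 - \<epsilon>) * (\<tau> * \<mu> / (2 * (2 - \<tau>)) * (norm (fst s - xstar))\<^sup>2)"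
      using F8(2) by simp
    also have "\<dots> \<le> (1 - \<epsilon>) * (f (fst s) - fstar)"
      using q eps by (intro mult_left_mono) auto
    finally show ?thesis by (auto simp: algebra_simps)
  qed
  moreover have "B * (norm (snd s - xstar))\<^sup>2 \<ge> 0" using pos by simp
  ultimately show ?thesis unfolding V_def by (simp add: algebra_simps)
qed

lemma V_nonneg: "V s \<ge> 0"
  using V_ge[of s] fmin[of "fst s"] eps by (smt (verit) mult_nonneg_nonneg)

lemma gen:
  shows "Tg y z \<ge> 0 \<and> (\<integral>\<^sup>+\<xi>. ennreal (V (y - gam *\<^sub>R g y \<xi>, z - gamp *\<^sub>R g y \<xi>)) \<partial>P) \<le> ennreal (Tg y z)"
proof -
  define u where "u = z - xstar"
  define v where "v = y - xstar"
  define c2 where "c2 = L * gam\<^sup>2 / 2 + B * gamp\<^sup>2"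
  define R where "R \<xi> = V (y, z) - gam * (df y \<bullet> g y \<xi>) - 2 * B * gamp * (u \<bullet> g y \<xi>) - 2 * D * gam * (v \<bullet> g y \<xi>)
      + c2 * (norm (g y \<xi>))\<^sup>2" for \<xi>
  have gm: "g y \<in> borel_measurable P"
  proof -
    have "(\<lambda>\<xi>. (y, \<xi>)) \<in> measurable P (borel \<Otimes>\<^sub>M P)" by measurable
    from measurable_compose[OF this g_meas] show ?thesis by simp
  qed
  have gi: "integrable P (g y)" using unbiased by auto
  have gE: "(\<integral>\<xi>. g y \<xi> \<partial>P) = df y" using unbiased by auto
  have n2m: "(\<lambda>\<xi>. (norm (g y \<xi>))\<^sup>2) \<in> borel_measurable P" using gm by measurable
  have n2i: "integrable P (\<lambda>\<xi>. (norm (g y \<xi>))\<^sup>2)"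
  proof (rule integrableI_nonneg[OF n2m])
    show "AE x in P. 0 \<le> (norm (g y x))\<^sup>2" by simp
    show "(\<integral>\<^sup>+ x. ennreal ((norm (g y x))\<^sup>2) \<partial>P) < \<infinity>"
      using SGC[of y] by (simp add: le_less_trans)
  qed
  have n2E: "(\<integral>\<xi>. (norm (g y \<xi>))\<^sup>2 \<partial>P) \<le> \<rho> * (norm (df y))\<^sup>2"
  proof -
    have "ennreal (\<integral>\<xi>. (norm (g y \<xi>))\<^sup>2 \<partial>P) = (\<integral>\<^sup>+ x. ennreal ((norm (g y x))\<^sup>2) \<partial>P)"
      by (rule nn_integral_eq_integral[symmetric, OF n2i]) simp
    also have "\<dots> \<le> ennreal (\<rho> * (norm (df y))\<^sup>2)" by (rule SGC)
    finally show ?thesis using rho by (subst (asm) ennreal_le_iff) auto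
  qed
  have jump: "V (y - gam *\<^sub>R g y \<xi>, z - gamp *\<^sub>R g y \<xi>) \<le> R \<xi>" for \<xi>
  proof -
    let ?G = "g y \<xi>"
    have s: "f (y - gam *\<^sub>R ?G) - f y - df y \<bullet> ((y - gam *\<^sub>R ?G) - y) \<le> L / 2 * (norm ((y - gam *\<^sub>R ?G) - y))\<^sup>2"
      by (rule smooth)
    have s': "f (y - gam *\<^sub>R ?G) \<le> f y - gam * (df y \<bullet> ?G) + L * gam\<^sup>2 / 2 * (norm ?G)\<^sup>2"
      using s pos by (simp add: power_mult_distrib abs_of_pos)
    have nz: "(norm (z - gamp *\<^sub>R ?G - xstar))\<^sup>2 = (norm u)\<^sup>2 - 2 * gamp * (u \<bullet> ?G) + gamp\<^sup>2 * (norm ?G)\<^sup>2"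
      unfolding u_def power2_norm_eq_inner by (simp add: algebra_simps inner_commute power2_eq_square)
    have ny: "(norm (y - gam *\<^sub>R ?G - xstar))\<^sup>2 = (norm v)\<^sup>2 - 2 * gam * (v \<bullet> ?G) + gam\<^sup>2 * (norm ?G)\<^sup>2"
      unfolding v_def power2_norm_eq_inner by (simp add: algebra_simps inner_commute power2_eq_square)
    have d: "D * (gam\<^sup>2 * (norm ?G)\<^sup>2) \<le> 0" using pos by (simp add: mult_nonpos_nonneg)
    show ?thesis unfolding V_def R_def c2_def fst_conv snd_conv nz ny u_def[symmetric] v_def[symmetric]
      using s' d by (simp add: algebra_simps)
  qed
  have Rm: "R \<in> borel_measurable P" unfolding R_def using gm by measurable
  have Ri: "integrable P R" unfolding R_def using gi n2i by simp
  have R0: "R \<xi> \<ge> 0" for \<xi> using jump[of \<xi>] V_nonneg[of "(y - gam *\<^sub>R g y \<xi>, z - gamp *\<^sub>R g y \<xi>)"] by simp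
  have IR: "(\<integral>\<xi>. R \<xi> \<partial>P) = V (y, z) - gam * (norm (df y))\<^sup>2 - 2 * B * gamp * (u \<bullet> df y) - 2 * D * gam * (v \<bullet> df y)
      + c2 * (\<integral>\<xi>. (norm (g y \<xi>))\<^sup>2 \<partial>P)"
    unfolding R_def using gi n2i gE by (simp add: power2_norm_eq_inner P.prob_space)
  have c20: "c2 \<ge> 0" unfolding c2_def using pos L_pos by simp
  have IR2: "(\<integral>\<xi>. R \<xi> \<partial>P) \<le> V (y, z) - eta * (u \<bullet> df y) - 2 * D * gam * (v \<bullet> df y)"
  proof -
    have "c2 * (\<integral>\<xi>. (norm (g y \<xi>))\<^sup>2 \<partial>P) \<le> c2 * (\<rho> * (norm (df y))\<^sup>2)"
      using c20 n2E by (simp add: mult_left_mono)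
    also have "\<dots> = (\<rho> * c2) * (norm (df y))\<^sup>2" by (simp add: algebra_simps)
    also have "\<dots> = gam * (norm (df y))\<^sup>2" using F2 unfolding c2_def by simp
    finally show ?thesis unfolding IR using F1 by simp
  qed
  have sq: "df y \<bullet> v \<ge> \<tau> * (f y - fstar) + \<tau> * \<mu> / 2 * (norm v)\<^sup>2"
  proof -
    have "fstar \<ge> f y + (1 / \<tau>) * (df y \<bullet> (xstar - y)) + \<mu> / 2 * (norm (y - xstar))\<^sup>2" by (rule SQC)
    moreover have e: "df y \<bullet> (xstar - y) = - (df y \<bullet> v)" unfolding v_def by (simp add: inner_diff_right)
    ultimately have "fstar \<ge> f y - (df y \<bullet> v) / \<tau> + \<mu> / 2 * (norm v)\<^sup>2"
      unfolding e v_def by simp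
    then have "\<tau> * fstar \<ge> \<tau> * f y - (df y \<bullet> v) + \<tau> * \<mu> / 2 * (norm v)\<^sup>2"
      using tau by (simp add: field_simps)
    then show ?thesis by (simp add: algebra_simps)
  qed
  define kap where "kap = eta + 2 * D * gam"
  have kap0: "kap \<ge> 0" using F5 pos tau unfolding kap_def
    by (smt (verit) mult_nonneg_nonneg mult_nonpos_nonneg)
  have Tgeq: "Tg y z = V (y, z) - eta * (u \<bullet> df y) - 2 * D * gam * (v \<bullet> df y)
     + ((kap * \<tau> - alpha) * (f y - fstar) + (kap * \<tau> * \<mu> / 2 + D * (2 * eta - alpha)) * (norm v)\<^sup>2)
     + kap * (df y \<bullet> v - (\<tau> * (f y - fstar) + \<tau> * \<mu> / 2 * (norm v)\<^sup>2))"
  proof -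
    have zy: "z - y = u - v" unfolding u_def v_def by simp
    have "Tg y z = V (y, z) - alpha * V (y, z) - (eta * (df y \<bullet> (u - v)) + 2 * B * etap * (u \<bullet> (v - u))
      + 2 * D * eta * (v \<bullet> (u - v)))"
      unfolding Tg_def zy by (simp add: u_def v_def)
    also have "\<dots> = V (y, z) - alpha * (f y - fstar + B * (norm u)\<^sup>2 + D * (norm v)\<^sup>2)
       - eta * (df y \<bullet> u) + eta * (df y \<bullet> v) - 2 * (B * etap + D * eta) * (u \<bullet> v)
       + 2 * B * etap * (norm u)\<^sup>2 + 2 * D * eta * (norm v)\<^sup>2"
      unfolding V_def u_def[symmetric] v_def[symmetric] fst_conv snd_conv
      by (simp add: algebra_simps inner_diff_right inner_commute power2_norm_eq_inner)
    also have "\<dots> = V (y, z) - eta * (u \<bullet> df y) - 2 * D * gam * (v \<bullet> df y)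
     + ((kap * \<tau> - alpha) * (f y - fstar) + (kap * \<tau> * \<mu> / 2 + D * (2 * eta - alpha)) * (norm v)\<^sup>2)
     + kap * (df y \<bullet> v - (\<tau> * (f y - fstar) + \<tau> * \<mu> / 2 * (norm v)\<^sup>2))"
      unfolding kap_def F4 F3 by (simp add: algebra_simps inner_commute)
    finally show ?thesis .
  qed
  have extra: "(kap * \<tau> - alpha) * (f y - fstar) + (kap * \<tau> * \<mu> / 2 + D * (2 * eta - alpha)) * (norm v)\<^sup>2
     + kap * (df y \<bullet> v - (\<tau> * (f y - fstar) + \<tau> * \<mu> / 2 * (norm v)\<^sup>2)) \<ge> 0"
  proof -
    have a: "(kap * \<tau> - alpha) * (f y - fstar) \<ge> 0" using F5 fmin[of y] unfolding kap_def by simp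
    have b: "(kap * \<tau> * \<mu> / 2 + D * (2 * eta - alpha)) * (norm v)\<^sup>2 \<ge> 0"
    proof (rule mult_nonneg_nonneg)
      have "D * (2 * eta - alpha) = - (D * (alpha - 2 * eta))" by (simp add: algebra_simps)
      then show "0 \<le> kap * \<tau> * \<mu> / 2 + D * (2 * eta - alpha)" using F6 unfolding kap_def by linarith
    qed simp
    have c: "kap * (df y \<bullet> v - (\<tau> * (f y - fstar) + \<tau> * \<mu> / 2 * (norm v)\<^sup>2)) \<ge> 0"
      using kap0 sq by simp
    show ?thesis using a b c by linarith
  qed
  have main: "(\<integral>\<xi>. R \<xi> \<partial>P) \<le> Tg y z" using IR2 Tgeq extra by linarith
  have "(\<integral>\<^sup>+\<xi>. ennreal (V (y - gam *\<^sub>R g y \<xi>, z - gamp *\<^sub>R g y \<xi>)) \<partial>P) \<le> (\<integral>\<^sup>+\<xi>. ennreal (R \<xi>) \<partial>P)"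
    by (intro nn_integral_mono ennreal_leI jump)
  also have "\<dots> = ennreal (\<integral>\<xi>. R \<xi> \<partial>P)" by (rule nn_integral_eq_integral[OF Ri]) (simp add: R0)
  also have "\<dots> \<le> ennreal (Tg y z)" using main by (rule ennreal_leI)
  finally have I: "(\<integral>\<^sup>+\<xi>. ennreal (V (y - gam *\<^sub>R g y \<xi>, z - gamp *\<^sub>R g y \<xi>)) \<partial>P) \<le> ennreal (Tg y z)" .
  have "0 \<le> (\<integral>\<xi>. R \<xi> \<partial>P)" using R0 by (simp add: integral_nonneg)
  then show ?thesis using main I by auto
qed

end


lemma vd_f:
  fixes f :: "'a::euclidean_space \<Rightarrow> real"
  assumes grad: "\<And>x. (f has_derivative (\<lambda>h. df x \<bullet> h)) (at x)"
    and p: "(p has_vector_derivative p') (at t)"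
  shows "((\<lambda>t. f (p t)) has_real_derivative (df (p t) \<bullet> p')) (at t)"
proof -
  have l: "(p has_derivative (\<lambda>h. h *\<^sub>R p')) (at t)" using p by (simp add: has_vector_derivative_def)
  have "((\<lambda>t. f (p t)) has_derivative (\<lambda>h. df (p t) \<bullet> (h *\<^sub>R p'))) (at t)"
    using has_derivative_compose[OF l grad] by simp
  moreover have "(\<lambda>h. df (p t) \<bullet> (h *\<^sub>R p')) = (*) (df (p t) \<bullet> p')"
    by (auto simp: mult.commute)
  ultimately show ?thesis unfolding has_field_derivative_def by simp
qed

lemma vd_sq:
  fixes p :: "real \<Rightarrow> 'a::euclidean_space"
  assumes p: "(p has_vector_derivative p') (at t)"
  shows "((\<lambda>t. (norm (p t - c))\<^sup>2) has_real_derivative (2 * ((p t - c) \<bullet> p'))) (at t)"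
proof -
  have l: "((\<lambda>t. p t - c) has_derivative (\<lambda>h. h *\<^sub>R p')) (at t)" using p
    by (auto simp: has_vector_derivative_def intro!: derivative_eq_intros)
  have "((\<lambda>t. (p t - c) \<bullet> (p t - c)) has_derivative (\<lambda>h. (p t - c) \<bullet> (h *\<^sub>R p') + (h *\<^sub>R p') \<bullet> (p t - c))) (at t)"
    by (rule has_derivative_inner[OF l l])
  moreover have "(\<lambda>h. (p t - c) \<bullet> (h *\<^sub>R p') + (h *\<^sub>R p') \<bullet> (p t - c)) = (*) (2 * ((p t - c) \<bullet> p'))"
    by (auto simp: inner_commute algebra_simps)
  ultimately show ?thesis unfolding has_field_derivative_def power2_norm_eq_inner by simp
qed

lemma vd_lin:
  assumes "(h has_real_derivative h') (at t)"
  shows "((\<lambda>t. a + h t *\<^sub>R w) has_vector_derivative (h' *\<^sub>R w)) (at t)"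
proof -
  have "((\<lambda>t. h t *\<^sub>R w) has_vector_derivative (h t *\<^sub>R 0 + h' *\<^sub>R w)) (at t)"
    by (rule has_vector_derivative_scaleR[OF assms has_vector_derivative_const])
  from has_vector_derivative_add[OF has_vector_derivative_const this] show ?thesis by simp
qed

context cnset begin

interpretation P: prob_space P by (rule P_prob)

lemma df_meas: "df \<in> borel_measurable borel"
proof -
  have "(\<lambda>x. \<integral>\<xi>. g x \<xi> \<partial>P) \<in> borel_measurable borel"
    using g_meas by (intro P.borel_measurable_lebesgue_integral) simp
  moreover have "(\<lambda>x. \<integral>\<xi>. g x \<xi> \<partial>P) = df" using unbiased by auto
  ultimately show ?thesis by simp
qed

lemma f_cont: "isCont f x"
  using has_derivative_continuous[OF grad] by simp

lemma f_meas: "f \<in> borel_measurable borel"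
  by (intro borel_measurable_continuous_onI continuous_at_imp_continuous_on) (auto simp: f_cont)

lemma V_meas: "V \<in> borel_measurable borel"
  unfolding V_def using f_meas by measurable

lemma g_meas1: "g y \<in> borel_measurable P"
proof -
  have "(\<lambda>\<xi>. (y, \<xi>)) \<in> measurable P (borel \<Otimes>\<^sub>M P)" by measurable
  from measurable_compose[OF this g_meas] show ?thesis by simp
qed

lemma one_step:
  "(\<integral>\<^sup>+w. ennreal (exp (alpha * fst w) * V (cn_step eta etap gam gamp g s w)) \<partial>step_law P) \<le> ennreal (V s)"
proof -
  obtain x z where s: "s = (x, z)" by (cases s)
  define ee where "ee t = exp (- (eta + etap) * t)" for t
  define yf where "yf t = x + (eta / (eta + etap) * (1 - ee t)) *\<^sub>R (z - x)" for t
  define zf where "zf t = z + (etap * (1 - ee t) / (etap + eta * ee t)) *\<^sub>R (yf t - z)" for t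
  have ee0: "ee t > 0" for t unfolding ee_def by simp
  have ep: "eta + etap > 0" using pos by simp
  have zf_alt: "zf t = z - (etap / (eta + etap) * (1 - ee t)) *\<^sub>R (z - x)" for t
  proof -
    have d: "etap + eta * ee t > 0" using pos ee0[of t] by (simp add: add_pos_pos)
    have c1: "yf t - z = (1 - eta / (eta + etap) * (1 - ee t)) *\<^sub>R (x - z)"
      unfolding yf_def by (simp add: scaleR_diff_left scaleR_diff_right algebra_simps)
    have k: "etap * (1 - ee t) / (etap + eta * ee t) * (1 - eta / (eta + etap) * (1 - ee t)) = etap / (eta + etap) * (1 - ee t)"
    proof -
      have c2: "1 - eta / (eta + etap) * (1 - ee t) = (etap + eta * ee t) / (eta + etap)"
        using ep by (simp add: field_simps)
      have "etap * (1 - ee t) / (etap + eta * ee t) * ((etap + eta * ee t) / (eta + etap)) = etap * (1 - ee t) / (eta + etap)"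
        using d by simp
      then show ?thesis unfolding c2 by simp
    qed
    have "zf t = z + (etap / (eta + etap) * (1 - ee t)) *\<^sub>R (x - z)"
      unfolding zf_def c1 scaleR_scaleR k ..
    also have "\<dots> = z - (etap / (eta + etap) * (1 - ee t)) *\<^sub>R (z - x)"
      by (simp add: scaleR_diff_right)
    finally show ?thesis .
  qed
  have zy: "zf t - yf t = ee t *\<^sub>R (z - x)" for t
  proof -
    have "zf t - yf t = (1 - etap / (eta + etap) * (1 - ee t) - eta / (eta + etap) * (1 - ee t)) *\<^sub>R (z - x)"
      unfolding zf_alt yf_def by (simp add: scaleR_diff_left scaleR_diff_right algebra_simps)
    also have "1 - etap / (eta + etap) * (1 - ee t) - eta / (eta + etap) * (1 - ee t) = ee t"
    proof -
      have pq: "etap / (eta + etap) + eta / (eta + etap) = 1"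
        using ep by (simp add: add_divide_distrib[symmetric] add.commute)
      have "1 - etap / (eta + etap) * (1 - ee t) - eta / (eta + etap) * (1 - ee t)
          = 1 - (etap / (eta + etap) + eta / (eta + etap)) * (1 - ee t)" by (simp add: algebra_simps)
      then show ?thesis unfolding pq by simp
    qed
    finally show ?thesis .
  qed
  have step_eq: "cn_step eta etap gam gamp g (x, z) (t, \<xi>) = (yf t - gam *\<^sub>R g (yf t) \<xi>, zf t - gamp *\<^sub>R g (yf t) \<xi>)" for t \<xi>
    unfolding cn_step_def Let_def yf_def zf_def ee_def by simp
  have eed: "(ee has_real_derivative (- (eta + etap) * ee t)) (at t)" for t
    unfolding ee_def by (auto intro!: derivative_eq_intros)
  have yd: "(yf has_vector_derivative (eta *\<^sub>R (zf t - yf t))) (at t)" for t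
  proof -
    have "((\<lambda>t. eta / (eta + etap) * (1 - ee t)) has_real_derivative (eta / (eta + etap) * (0 - (- (eta + etap) * ee t)))) (at t)"
      by (intro DERIV_cmult DERIV_diff DERIV_const eed DERIV_minus)
    moreover have "eta / (eta + etap) * (0 - (- (eta + etap) * ee t)) = eta * ee t" using ep by (simp add: field_simps)
    ultimately have "((\<lambda>t. eta / (eta + etap) * (1 - ee t)) has_real_derivative (eta * ee t)) (at t)" by simp
    moreover have yfe: "yf = (\<lambda>t. x + (eta / (eta + etap) * (1 - ee t)) *\<^sub>R (z - x))"
      by (rule ext) (simp add: yf_def)
    ultimately have "(yf has_vector_derivative (eta * ee t) *\<^sub>R (z - x)) (at t)"
      using vd_lin by metis
    moreover have "(eta * ee t) *\<^sub>R (z - x) = eta *\<^sub>R (zf t - yf t)" using zy[of t] by simp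
    ultimately show ?thesis by simp
  qed
  have zd: "(zf has_vector_derivative (etap *\<^sub>R (yf t - zf t))) (at t)" for t
  proof -
    have "((\<lambda>t. - (etap / (eta + etap) * (1 - ee t))) has_real_derivative - (etap / (eta + etap) * (0 - (- (eta + etap) * ee t)))) (at t)"
      by (intro DERIV_cmult DERIV_diff DERIV_const eed DERIV_minus)
    moreover have "- (etap / (eta + etap) * (0 - (- (eta + etap) * ee t))) = - (etap * ee t)" using ep by (simp add: field_simps)
    ultimately have "((\<lambda>t. - (etap / (eta + etap) * (1 - ee t))) has_real_derivative (- (etap * ee t))) (at t)" by simp
    from vd_lin[OF this, of z "z - x"] have "((\<lambda>t. z + - (etap / (eta + etap) * (1 - ee t)) *\<^sub>R (z - x)) has_vector_derivative (- (etap * ee t)) *\<^sub>R (z - x)) (at t)" .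
    moreover have "(\<lambda>t. z + - (etap / (eta + etap) * (1 - ee t)) *\<^sub>R (z - x)) = zf"
      by (rule ext) (simp add: zf_alt)
    moreover have "(- (etap * ee t)) *\<^sub>R (z - x) = etap *\<^sub>R (yf t - zf t)"
      using zy[of t] by (metis minus_diff_eq scaleR_minus_left scaleR_minus_right scaleR_scaleR)
    ultimately show ?thesis by simp
  qed
  define VV where "VV t = V (yf t, zf t)" for t
  define W where "W t = exp ((alpha - 1) * t) * VV t" for t
  define hh where "hh t = exp ((alpha - 1) * t) * Tg (yf t) (zf t)" for t
  have VVd: "(VV has_real_derivative (df (yf t) \<bullet> (eta *\<^sub>R (zf t - yf t)) + B * (2 * ((zf t - xstar) \<bullet> (etap *\<^sub>R (yf t - zf t))))
      + D * (2 * ((yf t - xstar) \<bullet> (eta *\<^sub>R (zf t - yf t)))))) (at t)" for t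
    unfolding VV_def[abs_def] V_def fst_conv snd_conv
    using DERIV_add[OF DERIV_add[OF DERIV_diff[OF vd_f[OF grad yd] DERIV_const] DERIV_cmult[OF vd_sq[OF zd]]] DERIV_cmult[OF vd_sq[OF yd]]]
    by simp
  have Wd: "((\<lambda>t. - W t) has_real_derivative hh t) (at t)" for t
  proof -
    have "((\<lambda>t. - W t) has_real_derivative - ((alpha - 1) * exp ((alpha - 1) * t) * VV t + exp ((alpha - 1) * t) *
       (df (yf t) \<bullet> (eta *\<^sub>R (zf t - yf t)) + B * (2 * ((zf t - xstar) \<bullet> (etap *\<^sub>R (yf t - zf t))))
      + D * (2 * ((yf t - xstar) \<bullet> (eta *\<^sub>R (zf t - yf t))))))) (at t)"
      unfolding W_def[abs_def] by (auto intro!: derivative_eq_intros VVd)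
    moreover have "- ((alpha - 1) * exp ((alpha - 1) * t) * VV t + exp ((alpha - 1) * t) *
       (df (yf t) \<bullet> (eta *\<^sub>R (zf t - yf t)) + B * (2 * ((zf t - xstar) \<bullet> (etap *\<^sub>R (yf t - zf t))))
      + D * (2 * ((yf t - xstar) \<bullet> (eta *\<^sub>R (zf t - yf t)))))) = hh t"
      unfolding hh_def Tg_def VV_def by (simp add: algebra_simps)
    ultimately show ?thesis by simp
  qed
  have ee_0: "ee 0 = 1" unfolding ee_def by simp
  have W0: "W 0 = V s" unfolding W_def VV_def yf_def zf_def ee_0 s by simp
  have hh0: "hh t \<ge> 0" for t unfolding hh_def using gen[of "yf t" "zf t"] by simp
  have inner: "ennreal (exponential_density 1 t) * (\<integral>\<^sup>+\<xi>. ennreal (exp (alpha * t) * V (cn_step eta etap gam gamp g s (t, \<xi>))) \<partial>P)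
      \<le> ennreal (hh t) * indicator {0..} t" for t
  proof (cases "t < 0")
    case True
    then show ?thesis by (simp add: exponential_density_def)
  next
    case False
    have vm: "(\<lambda>\<xi>. V (yf t - gam *\<^sub>R g (yf t) \<xi>, zf t - gamp *\<^sub>R g (yf t) \<xi>)) \<in> borel_measurable P"
      using g_meas1[of "yf t"] V_meas by measurable
    have "(\<integral>\<^sup>+\<xi>. ennreal (exp (alpha * t) * V (cn_step eta etap gam gamp g s (t, \<xi>))) \<partial>P)
        = (\<integral>\<^sup>+\<xi>. ennreal (exp (alpha * t)) * ennreal (V (yf t - gam *\<^sub>R g (yf t) \<xi>, zf t - gamp *\<^sub>R g (yf t) \<xi>)) \<partial>P)"
      unfolding s step_eq by (simp add: ennreal_mult')
    also have "\<dots> = ennreal (exp (alpha * t)) * (\<integral>\<^sup>+\<xi>. ennreal (V (yf t - gam *\<^sub>R g (yf t) \<xi>, zf t - gamp *\<^sub>R g (yf t) \<xi>)) \<partial>P)"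
      using vm by (intro nn_integral_cmult) measurable
    also have "\<dots> \<le> ennreal (exp (alpha * t)) * ennreal (Tg (yf t) (zf t))"
      using gen[of "yf t" "zf t"] by (intro mult_left_mono) auto
    finally have I: "(\<integral>\<^sup>+\<xi>. ennreal (exp (alpha * t) * V (cn_step eta etap gam gamp g s (t, \<xi>))) \<partial>P)
       \<le> ennreal (exp (alpha * t)) * ennreal (Tg (yf t) (zf t))" .
    have "ennreal (exponential_density 1 t) * (\<integral>\<^sup>+\<xi>. ennreal (exp (alpha * t) * V (cn_step eta etap gam gamp g s (t, \<xi>))) \<partial>P)
       \<le> ennreal (exp (- t)) * (ennreal (exp (alpha * t)) * ennreal (Tg (yf t) (zf t)))"
      using False I by (simp add: exponential_density_def mult_left_mono)
    also have "\<dots> = ennreal (hh t)"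
      unfolding hh_def using gen[of "yf t" "zf t"]
      by (simp add: ennreal_mult'[symmetric] exp_add[symmetric] algebra_simps)
    finally show ?thesis using False by simp
  qed
  have hhm: "hh \<in> borel_measurable borel"
    unfolding hh_def Tg_def V_def yf_def zf_def ee_def fst_conv snd_conv
    using f_meas df_meas by measurable
  have eelim: "(ee \<longlongrightarrow> 0) at_top"
    unfolding ee_def using ep by real_asymp
  have elim: "((\<lambda>t. exp ((alpha - 1) * t)) \<longlongrightarrow> 0) at_top"
    using F7 by real_asymp
  have VVlim: "(VV \<longlongrightarrow> V (yf' , zf')) at_top"
    if "yf' = x + (eta / (eta + etap) * (1 - 0)) *\<^sub>R (z - x)"
       "zf' = z - (etap / (eta + etap) * (1 - 0)) *\<^sub>R (z - x)" for yf' zf'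
  proof -
    have yl: "(yf \<longlongrightarrow> yf') at_top" unfolding yf_def[abs_def] that
      by (intro tendsto_intros eelim)
    have zl: "(zf \<longlongrightarrow> zf') at_top"
    proof -
      have "((\<lambda>t. z - (etap / (eta + etap) * (1 - ee t)) *\<^sub>R (z - x)) \<longlongrightarrow> zf') at_top"
        unfolding that by (intro tendsto_intros eelim)
      moreover have "(\<lambda>t. z - (etap / (eta + etap) * (1 - ee t)) *\<^sub>R (z - x)) = zf"
        by (rule ext) (simp add: zf_alt)
      ultimately show ?thesis by simp
    qed
    show ?thesis unfolding VV_def[abs_def] V_def fst_conv snd_conv
      by (intro tendsto_intros yl zl isCont_tendsto_compose[OF f_cont yl])
  qed
  have Wlim: "((\<lambda>t. - W t) \<longlongrightarrow> 0) at_top"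
  proof -
    have "((\<lambda>t. - (exp ((alpha - 1) * t) * VV t)) \<longlongrightarrow> - (0 * V (x + (eta / (eta + etap) * (1 - 0)) *\<^sub>R (z - x), z - (etap / (eta + etap) * (1 - 0)) *\<^sub>R (z - x)))) at_top"
      by (intro tendsto_intros elim VVlim refl)
    then show ?thesis unfolding W_def by simp
  qed
  have Fm: "(\<lambda>w. ennreal (exp (alpha * fst w) * V (cn_step eta etap gam gamp g s w))) \<in> borel_measurable (step_law P)"
  proof -
    have vm: "(\<lambda>w. V (cn_step eta etap gam gamp g s w)) \<in> borel_measurable (step_law P)"
      by (rule measurable_compose[OF cn_step_meas2[OF g_meas] V_meas])
    note fm = fst_step_meas[of P]
    show ?thesis using vm fm by measurable
  qed
  have "(\<integral>\<^sup>+w. ennreal (exp (alpha * fst w) * V (cn_step eta etap gam gamp g s w)) \<partial>step_law P)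
      = (\<integral>\<^sup>+t. (\<integral>\<^sup>+\<xi>. ennreal (exp (alpha * t) * V (cn_step eta etap gam gamp g s (t, \<xi>))) \<partial>P) \<partial>density lborel (exponential_density 1))"
    using P.nn_integral_fst[OF Fm[unfolded step_law_def]] unfolding step_law_def by simp
  also have "\<dots> = (\<integral>\<^sup>+t. ennreal (exponential_density 1 t) * (\<integral>\<^sup>+\<xi>. ennreal (exp (alpha * t) * V (cn_step eta etap gam gamp g s (t, \<xi>))) \<partial>P) \<partial>lborel)"
  proof (rule nn_integral_density)
    show "(\<lambda>x. ennreal (exponential_density 1 x)) \<in> borel_measurable lborel" by measurable
    have "(\<lambda>t. \<integral>\<^sup>+\<xi>. ennreal (exp (alpha * t) * V (cn_step eta etap gam gamp g s (t, \<xi>))) \<partial>P) \<in> borel_measurable (density lborel (exponential_density 1))"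
      using P.borel_measurable_nn_integral_fst[OF Fm[unfolded step_law_def]] by simp
    then show "(\<lambda>t. \<integral>\<^sup>+\<xi>. ennreal (exp (alpha * t) * V (cn_step eta etap gam gamp g s (t, \<xi>))) \<partial>P) \<in> borel_measurable lborel"
      by simp
  qed
  also have "\<dots> \<le> (\<integral>\<^sup>+t. ennreal (hh t) * indicator {0..} t \<partial>lborel)"
    by (intro nn_integral_mono inner)
  also have "\<dots> = ennreal (0 - (- W 0))"
    by (rule nn_integral_FTC_atLeast[OF hhm Wd hh0 Wlim])
  finally show ?thesis using W0 by simp
qed

end


theorem theorem5:
  fixes f :: "'a::euclidean_space \<Rightarrow> real" and df :: "'a \<Rightarrow> 'a"
    and P :: "'b measure" and g :: "'a \<Rightarrow> 'b \<Rightarrow> 'a"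
    and fstar L \<mu> \<tau> \<rho> \<epsilon> :: real and xstar x0 :: 'a
  assumes grad: "\<And>x. (f has_derivative (\<lambda>h. df x \<bullet> h)) (at x)"
    and fmin: "\<And>x. fstar \<le> f x" and xstar_min: "f xstar = fstar"
    and L_pos: "L > 0" and mu_pos: "\<mu> > 0"
    and tau: "0 < \<tau>" "\<tau> \<le> 1" and rho: "\<rho> \<ge> 1"
    and smooth: "\<And>x y. f x - f y - df y \<bullet> (x - y) \<le> L / 2 * (norm (x - y))\<^sup>2"
    and SQC: "\<And>x. fstar \<ge> f x + (1 / \<tau>) * (df x \<bullet> (xstar - x)) + \<mu> / 2 * (norm (x - xstar))\<^sup>2"
    and P_prob: "prob_space P"
    and g_meas: "(\<lambda>(x, \<xi>). g x \<xi>) \<in> borel_measurable (borel \<Otimes>\<^sub>M P)"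
    and unbiased: "\<And>x. integrable P (g x) \<and> (\<integral>\<xi>. g x \<xi> \<partial>P) = df x"
    and SGC: "\<And>x. (\<integral>\<^sup>+\<xi>. ennreal ((norm (g x \<xi>))\<^sup>2) \<partial>P) \<le> ennreal (\<rho> * (norm (df x))\<^sup>2)"
    and eps: "0 < \<epsilon>" "\<epsilon> < 1" "\<epsilon> \<ge> (\<mu> / L) powr (1/4)"
  shows "(\<integral>\<^sup>+\<omega>. ennreal (exp ((1 - \<epsilon>) * \<tau> / \<rho> * sqrt (2 / (2 - \<tau>)) * sqrt (\<mu> / L) * cn_T k \<omega>)
              * (f (fst (cn_iter
                    (1 / \<rho> * sqrt (2 / (2 - \<tau>)) * sqrt (\<mu> / L))
                    ((1 - \<epsilon>) * \<tau> / \<rho> * sqrt (1 / (2 * (2 - \<tau>))) * sqrt (\<mu> / L))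
                    (1 / (\<rho> * L))
                    (1 / \<rho> * sqrt ((2 - \<tau>) / (2 * \<mu> * L)))
                    g x0 k \<omega>)) - fstar)) \<partial>cn_space P)
         \<le> ennreal (1 / \<epsilon> * (f x0 - fstar + \<mu> * (norm (x0 - xstar))\<^sup>2))"
proof -
  define eta where "eta = 1 / \<rho> * sqrt (2 / (2 - \<tau>)) * sqrt (\<mu> / L)"
  define etap where "etap = (1 - \<epsilon>) * \<tau> / \<rho> * sqrt (1 / (2 * (2 - \<tau>))) * sqrt (\<mu> / L)"
  define gam where "gam = 1 / (\<rho> * L)"
  define gamp where "gamp = 1 / \<rho> * sqrt ((2 - \<tau>) / (2 * \<mu> * L))"
  define alpha where "alpha = (1 - \<epsilon>) * \<tau> / \<rho> * sqrt (2 / (2 - \<tau>)) * sqrt (\<mu> / L)"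
  define B where "B = \<mu> / (2 - \<tau>)"
  define D where "D = - B * (1 - \<epsilon>) * \<tau> / 2"
  interpret Pp: prob_space P by (rule P_prob)
  interpret C: cnset f df P g fstar L \<mu> \<tau> \<rho> \<epsilon> xstar eta etap gam gamp alpha B D
    by (unfold_locales; (fact grad fmin xstar_min L_pos mu_pos tau rho smooth SQC P_prob g_meas unbiased SGC eps
        eta_def etap_def gam_def gamp_def alpha_def B_def D_def Pp.sigma_finite_countable Pp.emeasure_space_1)?; simp add: Pp.emeasure_space_1)
  let ?it = "cn_iter eta etap gam gamp g x0 k"
  have it: "(\<integral>\<^sup>+\<omega>. ennreal (exp (alpha * cn_T k \<omega>) * C.V (?it \<omega>)) \<partial>cn_space P) \<le> ennreal (C.V (x0, x0))"
    by (rule iter_bound[OF P_prob g_meas C.V_meas C.one_step])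
  have im: "(\<lambda>\<omega>. ennreal (exp (alpha * cn_T k \<omega>) * C.V (?it \<omega>))) \<in> borel_measurable (cn_space P)"
  proof -
    have "(\<lambda>\<omega>. cn_T k \<omega>) \<in> borel_measurable (cn_space P)"
      unfolding cn_T_def cn_space_def
    proof (intro borel_measurable_sum)
      fix i :: nat
      have fstm: "fst \<in> borel_measurable (step_law P)"
        unfolding measurable_cong_sets[OF sets_step_law refl] by (rule measurable_fst)
      show "(\<lambda>\<omega>. fst (\<omega> i)) \<in> borel_measurable (PiM UNIV (\<lambda>_. step_law P))"
        using measurable_compose[OF measurable_component_singleton[of i UNIV] fstm] by simp
    qed
    moreover have "?it \<in> borel_measurable (cn_space P)"
      unfolding cn_space_def by (rule cn_iter_meas[OF g_meas]) simp
    ultimately show ?thesis using C.V_meas by measurable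
  qed
  have "(\<integral>\<^sup>+\<omega>. ennreal (exp (alpha * cn_T k \<omega>) * (f (fst (?it \<omega>)) - fstar)) \<partial>cn_space P)
      \<le> (\<integral>\<^sup>+\<omega>. ennreal (1 / \<epsilon>) * ennreal (exp (alpha * cn_T k \<omega>) * C.V (?it \<omega>)) \<partial>cn_space P)"
  proof (rule nn_integral_mono)
    fix \<omega>
    have "\<epsilon> * (f (fst (?it \<omega>)) - fstar) \<le> C.V (?it \<omega>)" by (rule C.V_ge)
    then have "f (fst (?it \<omega>)) - fstar \<le> 1 / \<epsilon> * C.V (?it \<omega>)" using eps by (simp add: field_simps)
    then have "exp (alpha * cn_T k \<omega>) * (f (fst (?it \<omega>)) - fstar) \<le> exp (alpha * cn_T k \<omega>) * (1 / \<epsilon> * C.V (?it \<omega>))"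
      by (rule mult_left_mono) simp
    then have "exp (alpha * cn_T k \<omega>) * (f (fst (?it \<omega>)) - fstar) \<le> 1 / \<epsilon> * (exp (alpha * cn_T k \<omega>) * C.V (?it \<omega>))"
      by (simp add: mult.left_commute)
    then show "ennreal (exp (alpha * cn_T k \<omega>) * (f (fst (?it \<omega>)) - fstar)) \<le> ennreal (1 / \<epsilon>) * ennreal (exp (alpha * cn_T k \<omega>) * C.V (?it \<omega>))"
      using eps by (simp add: ennreal_mult'[symmetric] ennreal_leI)
  qed
  also have "\<dots> = ennreal (1 / \<epsilon>) * (\<integral>\<^sup>+\<omega>. ennreal (exp (alpha * cn_T k \<omega>) * C.V (?it \<omega>)) \<partial>cn_space P)"
    using im by (rule nn_integral_cmult)
  also have "\<dots> \<le> ennreal (1 / \<epsilon>) * ennreal (C.V (x0, x0))"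
    using it by (rule mult_left_mono) simp
  also have "\<dots> \<le> ennreal (1 / \<epsilon> * (f x0 - fstar + \<mu> * (norm (x0 - xstar))\<^sup>2))"
  proof -
    have "C.V (x0, x0) = f x0 - fstar + (B + D) * (norm (x0 - xstar))\<^sup>2"
      unfolding C.V_def by (simp add: algebra_simps)
    also have "\<dots> \<le> f x0 - fstar + \<mu> * (norm (x0 - xstar))\<^sup>2"
      using C.F8(1) by (simp add: mult_right_mono)
    finally have "C.V (x0, x0) \<le> f x0 - fstar + \<mu> * (norm (x0 - xstar))\<^sup>2" .
    then have "1 / \<epsilon> * C.V (x0, x0) \<le> 1 / \<epsilon> * (f x0 - fstar + \<mu> * (norm (x0 - xstar))\<^sup>2)"
      using eps by (intro mult_left_mono) auto
    then show ?thesis using eps by (simp only: ennreal_mult'[symmetric] ennreal_leI less_imp_le divide_nonneg_nonneg zero_le_one)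
  qed
  finally show ?thesis unfolding eta_def etap_def gam_def gamp_def alpha_def .
qed



end
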